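(* Let $R$ be an elliptic core operator with nodes $Z_t=(x_t,y_t)$, $t=1,\dots,K$ (as defined in the context). Then for every $j=1,\dots,K$ there is a constant $C$ such that $|m|^{x_j}|n|^{y_j}\leqslant C|P_R(m,n)|$ for all real $m,n$ with $\max\{|m|,|n|\}$ sufficiently large.
   Context: Let $K\geqslant2$ and $Z_t=(x_t,y_t)$, $t=1,\dots,K$, be points with nonnegative integer coordinates, $x_1>\dots>x_K$, $y_1<\dots<y_K$, slopes $s_t=(y_{t+1}-y_t)/(x_{t+1}-x_t)$ satisfying $s_1<\dots<s_{K-1}<0$ (a concave broken line). The core is $\bigcup_{t=1}^{K-1}[Z_t,Z_{t+1}]$. A core operator is $R=\sum_Pc_P\partial_1^{P_1}\partial_2^{P_2}$ (differential operator on $\mathbb{T}^2$) over integer points $P$ of the core, with $c_{Z_t}\ne0$ for all $t$; its characteristic polynomial is $P_R(x,y)=\sum_Pc_P(2\pi ix)^{P_1}(2\pi iy)^{P_2}$. With $S_t$ the sum of terms of $R$ whose biindices lie on $[Z_t,Z_{t+1}]$, $R$ is elliptic if each $P_{S_t}$ ($t=1,\dots,K-1$) has no zeros in $\mathbb{R}^2$ outside the coordinate axes. *)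

theory Defs
  imports "HOL-Analysis.Analysis"
begin

text \<open>Nodes are given as a function Z :: nat => nat * nat, used on indices 1..K.
  Coordinates are nonnegative integers, hence nat.\<close>

definition slope :: "(nat \<Rightarrow> nat \<times> nat) \<Rightarrow> nat \<Rightarrow> real" where
  "slope Z t = (real (snd (Z (Suc t))) - real (snd (Z t))) /
                (real (fst (Z (Suc t))) - real (fst (Z t)))"

definition concave_broken_line :: "nat \<Rightarrow> (nat \<Rightarrow> nat \<times> nat) \<Rightarrow> bool" where
  "concave_broken_line K Z \<longleftrightarrow> K \<ge> 2
     \<and> (\<forall>t\<in>{1..<K}. fst (Z (Suc t)) < fst (Z t) \<and> snd (Z t) < snd (Z (Suc t)))
     \<and> (\<forall>t\<in>{1..<K-1}. slope Z t < slope Z (Suc t))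
     \<and> slope Z (K - 1) < 0"

definition node_pt :: "nat \<times> nat \<Rightarrow> real \<times> real" where
  "node_pt P = (real (fst P), real (snd P))"

definition seg_pts :: "(nat \<Rightarrow> nat \<times> nat) \<Rightarrow> nat \<Rightarrow> (nat \<times> nat) set" where
  "seg_pts Z t = {P. node_pt P \<in> closed_segment (node_pt (Z t)) (node_pt (Z (Suc t)))}"

definition core_pts :: "nat \<Rightarrow> (nat \<Rightarrow> nat \<times> nat) \<Rightarrow> (nat \<times> nat) set" where
  "core_pts K Z = (\<Union>t\<in>{1..<K}. seg_pts Z t)"

text \<open>Characteristic polynomial of the operator sum over P in A of c_P d1^P1 d2^P2.\<close>
definition char_poly :: "(nat \<times> nat) set \<Rightarrow> (nat \<times> nat \<Rightarrow> complex) \<Rightarrow> real \<Rightarrow> real \<Rightarrow> complex" where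
  "char_poly A c x y = (\<Sum>P\<in>A. c P * (2 * of_real pi * \<i> * of_real x) ^ fst P
                                       * (2 * of_real pi * \<i> * of_real y) ^ snd P)"

text \<open>Core operator R = sum over core points P of c_P d1^P1 d2^P2 with c_(Z_t) nonzero.\<close>
definition core_operator :: "nat \<Rightarrow> (nat \<Rightarrow> nat \<times> nat) \<Rightarrow> (nat \<times> nat \<Rightarrow> complex) \<Rightarrow> bool" where
  "core_operator K Z c \<longleftrightarrow> concave_broken_line K Z \<and> (\<forall>t\<in>{1..K}. c (Z t) \<noteq> 0)"

definition elliptic :: "nat \<Rightarrow> (nat \<Rightarrow> nat \<times> nat) \<Rightarrow> (nat \<times> nat \<Rightarrow> complex) \<Rightarrow> bool" where
  "elliptic K Z c \<longleftrightarrow> (\<forall>t\<in>{1..<K}. \<forall>x y :: real. x \<noteq> 0 \<longrightarrow> y \<noteq> 0 \<longrightarrow>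
       char_poly (seg_pts Z t) c x y \<noteq> 0)"

end

theory Submission
  imports Defs
begin


locale LL =
  fixes K :: nat and Z :: "nat \<Rightarrow> nat \<times> nat" and c :: "nat \<times> nat \<Rightarrow> complex"
  assumes core: "core_operator K Z c" and ell: "elliptic K Z c"
begin

definition xx :: "nat \<Rightarrow> int" where "xx t = int (fst (Z t))"
definition yy :: "nat \<Rightarrow> int" where "yy t = int (snd (Z t))"
definition al :: "nat \<Rightarrow> int" where "al t = xx t - xx (Suc t)"
definition be :: "nat \<Rightarrow> int" where "be t = yy (Suc t) - yy t"
definition lf :: "nat \<Rightarrow> nat \<times> nat \<Rightarrow> int" where
  "lf t P = be t * int (fst P) + al t * int (snd P)"

lemma K2: "K \<ge> 2" using core unfolding core_operator_def concave_broken_line_def by auto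

lemma chain: "1 \<le> t \<Longrightarrow> t < K \<Longrightarrow> al t > 0 \<and> be t > 0"
  using core unfolding core_operator_def concave_broken_line_def al_def be_def xx_def yy_def
  by auto

lemma slope_eq: "1 \<le> t \<Longrightarrow> t < K \<Longrightarrow> slope Z t = - of_int (be t) / of_int (al t)"
  unfolding slope_def be_def al_def xx_def yy_def
  by (simp add: divide_simps) (simp add: algebra_simps)

lemma slope_step: "1 \<le> t \<Longrightarrow> Suc t < K \<Longrightarrow> slope Z t < slope Z (Suc t)"
  using core unfolding core_operator_def concave_broken_line_def by auto

lemma slope_mono: "1 \<le> t \<Longrightarrow> t < s \<Longrightarrow> s < K \<Longrightarrow> slope Z t < slope Z s"
proof (induction s rule: less_induct)
  case (less s)
  show ?case
  proof (cases "Suc t = s")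
    case True then show ?thesis using slope_step less by auto
  next
    case False
    then obtain s' where s': "s = Suc s'" "t < s'" using less by (cases s) auto
    have "slope Z t < slope Z s'" using less s' by auto
    also have "\<dots> < slope Z s" using slope_step[of s'] s' less by auto
    finally show ?thesis .
  qed
qed

lemma cross: "1 \<le> t \<Longrightarrow> t < s \<Longrightarrow> s < K \<Longrightarrow> be s * al t < be t * al s"
proof -
  assume a: "1 \<le> t" "t < s" "s < K"
  have "slope Z t < slope Z s" using slope_mono a by auto
  hence "- of_int (be t) / of_int (al t) < - (of_int (be s) / (of_int (al s)::real))"
    using slope_eq a by auto
  moreover have "al t > 0" "al s > 0" using chain a by auto
  ultimately have "real_of_int (be s) * of_int (al t) < of_int (be t) * of_int (al s)"
    by (simp add: divide_simps)
  thus ?thesis by (metis of_int_less_iff of_int_mult)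
qed

lemma lf_diff: "lf t (Z (Suc i)) - lf t (Z i) = al t * be i - be t * al i"
  unfolding lf_def al_def be_def xx_def yy_def by (simp add: algebra_simps)

lemma lf_desc: "1 \<le> t \<Longrightarrow> t < i \<Longrightarrow> i < K \<Longrightarrow> lf t (Z (Suc i)) < lf t (Z i)"
  using lf_diff[of t i] cross[of t i] by (simp add: algebra_simps)

lemma lf_asc: "1 \<le> i \<Longrightarrow> i < t \<Longrightarrow> t < K \<Longrightarrow> lf t (Z i) < lf t (Z (Suc i))"
  using lf_diff[of t i] cross[of i t] by (simp add: algebra_simps)

lemma lf_same: "lf t (Z (Suc t)) = lf t (Z t)"
  using lf_diff[of t t] by (simp add: algebra_simps)

lemma desc_chain: "Suc t \<le> i \<Longrightarrow> i \<le> K \<Longrightarrow> 1 \<le> t \<Longrightarrow> lf t (Z i) + int (i - Suc t) \<le> lf t (Z (Suc t))"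
proof (induction i rule: dec_induct)
  case base then show ?case by simp
next
  case (step n)
  have "lf t (Z (Suc n)) < lf t (Z n)" using lf_desc[of t n] step by auto
  then show ?case using step by auto
qed

lemma asc_chain: "i \<le> t \<Longrightarrow> 1 \<le> i \<Longrightarrow> t < K \<Longrightarrow> lf t (Z i) + int (t - i) \<le> lf t (Z t)"
proof (induction i rule: inc_induct)
  case base then show ?case by simp
next
  case (step n)
  have "lf t (Z n) < lf t (Z (Suc n))" using lf_asc[of n t] step by auto
  then show ?case using step by (auto simp: Suc_diff_Suc)
qed

lemma lf_node: "1 \<le> t \<Longrightarrow> t < K \<Longrightarrow> 1 \<le> i \<Longrightarrow> i \<le> K \<Longrightarrow>
   lf t (Z i) \<le> lf t (Z t) \<and> (lf t (Z i) = lf t (Z t) \<longrightarrow> i = t \<or> i = Suc t)"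
proof (cases "i \<le> t")
  case True
  assume a: "1 \<le> t" "t < K" "1 \<le> i" "i \<le> K"
  show ?thesis using asc_chain[OF True a(3) a(2)] True by auto
next
  case False
  assume a: "1 \<le> t" "t < K" "1 \<le> i" "i \<le> K"
  show ?thesis using desc_chain[of t i] a False lf_same[of t] by auto
qed

lemma seg_mem: "P \<in> seg_pts Z t \<longleftrightarrow> (\<exists>u. 0 \<le> u \<and> u \<le> 1 \<and>
   real (fst P) = (1-u) * real (fst (Z t)) + u * real (fst (Z (Suc t))) \<and>
   real (snd P) = (1-u) * real (snd (Z t)) + u * real (snd (Z (Suc t))))"
  unfolding seg_pts_def node_pt_def closed_segment_def by (auto simp: prod_eq_iff)

lemma Z_in_seg: "Z t \<in> seg_pts Z t" "Z (Suc t) \<in> seg_pts Z t"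
  unfolding seg_mem by (rule exI[of _ 0]; simp) (rule exI[of _ 1]; simp)

lemma seg_core: "1 \<le> t \<Longrightarrow> t < K \<Longrightarrow> seg_pts Z t \<subseteq> core_pts K Z"
  unfolding core_pts_def by auto

lemma Z_core: "1 \<le> j \<Longrightarrow> j \<le> K \<Longrightarrow> Z j \<in> core_pts K Z"
proof (cases "j < K")
  case True
  assume "1 \<le> j"
  then show ?thesis using True Z_in_seg(1)[of j] seg_core[of j] by auto
next
  case False
  assume "1 \<le> j" "j \<le> K"
  then have "j = Suc (K - 1)" "1 \<le> K - 1" "K - 1 < K" using K2 False by auto
  then show ?thesis using Z_in_seg(2)[of "K - 1"] seg_core[of "K - 1"] by auto
qed

lemma seg_lf: "P \<in> seg_pts Z s \<Longrightarrow> \<exists>u::real. 0 \<le> u \<and> u \<le> 1 \<and>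
   real_of_int (lf t P) = (1-u) * real_of_int (lf t (Z s)) + u * real_of_int (lf t (Z (Suc s))) \<and>
   (u = 0 \<longrightarrow> P = Z s) \<and> (u = 1 \<longrightarrow> P = Z (Suc s))"
proof -
  assume "P \<in> seg_pts Z s"
  then obtain u where u: "0 \<le> u" "u \<le> 1"
    "real (fst P) = (1-u) * real (fst (Z s)) + u * real (fst (Z (Suc s)))"
    "real (snd P) = (1-u) * real (snd (Z s)) + u * real (snd (Z (Suc s)))"
    unfolding seg_mem by blast
  have "real_of_int (lf t P) = (1-u) * real_of_int (lf t (Z s)) + u * real_of_int (lf t (Z (Suc s)))"
  proof -
    have e: "\<And>Q. real_of_int (lf t Q) = real_of_int (be t) * real (fst Q) + real_of_int (al t) * real (snd Q)"
      by (simp add: lf_def)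
    show ?thesis unfolding e u(3) u(4) by (simp add: algebra_simps)
  qed
  moreover have "u = 0 \<longrightarrow> P = Z s" using u(3,4) by (auto simp: prod_eq_iff)
  moreover have "u = 1 \<longrightarrow> P = Z (Suc s)" using u(3,4) by (auto simp: prod_eq_iff)
  ultimately show ?thesis using u(1,2) by blast
qed

lemma core_seg: "P \<in> core_pts K Z \<Longrightarrow> \<exists>s. 1 \<le> s \<and> s < K \<and> P \<in> seg_pts Z s"
  unfolding core_pts_def by auto

lemma core_lf: assumes t: "1 \<le> t" "t < K" and P: "P \<in> core_pts K Z"
  shows "lf t P \<le> lf t (Z t) \<and> (lf t P = lf t (Z t) \<longrightarrow> P \<in> seg_pts Z t)"
proof -
  obtain s where s: "1 \<le> s" "s < K" "P \<in> seg_pts Z s" using core_seg[OF P] by blast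
  obtain u where u: "0 \<le> u" "u \<le> 1"
    "real_of_int (lf t P) = (1-u) * real_of_int (lf t (Z s)) + u * real_of_int (lf t (Z (Suc s)))"
    "u = 0 \<longrightarrow> P = Z s" "u = 1 \<longrightarrow> P = Z (Suc s)"
    using seg_lf[OF s(3), of t] by blast
  have n1: "lf t (Z s) \<le> lf t (Z t) \<and> (lf t (Z s) = lf t (Z t) \<longrightarrow> s = t \<or> s = Suc t)"
    using lf_node[OF t, of s] s by auto
  have n2: "lf t (Z (Suc s)) \<le> lf t (Z t) \<and> (lf t (Z (Suc s)) = lf t (Z t) \<longrightarrow> Suc s = t \<or> Suc s = Suc t)"
    using lf_node[OF t, of "Suc s"] s by auto
  define w where "w = real_of_int (lf t (Z t))"
  have a1: "real_of_int (lf t (Z s)) \<le> w" "real_of_int (lf t (Z (Suc s))) \<le> w"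
    using n1 n2 unfolding w_def by auto
  have "(1-u) * real_of_int (lf t (Z s)) + u * real_of_int (lf t (Z (Suc s))) \<le> (1-u) * w + u * w"
    using a1 u(1,2) by (intro add_mono mult_left_mono) auto
  hence le: "real_of_int (lf t P) \<le> w" using u(3) by (simp add: algebra_simps)
  have eq: "P \<in> seg_pts Z t" if h: "lf t P = lf t (Z t)"
  proof -
    have "(1-u) * (w - lf t (Z s)) + u * (w - lf t (Z (Suc s))) = 0"
      using h u(3) unfolding w_def by (simp add: algebra_simps)
    moreover have "(1-u) * (w - lf t (Z s)) \<ge> 0" "u * (w - lf t (Z (Suc s))) \<ge> 0"
      using a1 u(1,2) by auto
    ultimately have z: "(1-u) * (w - lf t (Z s)) = 0" "u * (w - lf t (Z (Suc s))) = 0" by linarith+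
    show ?thesis
    proof (cases "u = 0")
      case True
      then have "P = Z s" "lf t (Z s) = lf t (Z t)" using u(4) h by auto
      then show ?thesis using n1 Z_in_seg[of t] by auto
    next
      case u0: False
      show ?thesis
      proof (cases "u = 1")
        case True
        then have "P = Z (Suc s)" "lf t (Z (Suc s)) = lf t (Z t)" using u(5) h by auto
        then show ?thesis using n2 Z_in_seg[of t] by auto
      next
        case False
        then have "lf t (Z s) = lf t (Z t)" "lf t (Z (Suc s)) = lf t (Z t)"
          using z u0 unfolding w_def by auto
        then have "s = t" using n1 n2 by auto
        then show ?thesis using s by auto
      qed
    qed
  qed
  show ?thesis using le eq unfolding w_def by auto
qed

lemma y_mono: "Suc i \<le> j \<Longrightarrow> j \<le> K \<Longrightarrow> 1 \<le> i \<Longrightarrow> snd (Z i) < snd (Z j)"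
proof (induction j rule: dec_induct)
  case base then show ?case using chain[of i] unfolding be_def yy_def by auto
next
  case (step n)
  then show ?case using chain[of n] unfolding be_def yy_def by auto
qed

lemma x_mono: "Suc i \<le> j \<Longrightarrow> j \<le> K \<Longrightarrow> 1 \<le> i \<Longrightarrow> fst (Z j) < fst (Z i)"
proof (induction j rule: dec_induct)
  case base then show ?case using chain[of i] unfolding al_def xx_def by auto
next
  case (step n)
  then show ?case using chain[of n] unfolding al_def xx_def by auto
qed

lemma core_y: assumes P: "P \<in> core_pts K Z"
  shows "snd (Z 1) \<le> snd P \<and> (snd P = snd (Z 1) \<longrightarrow> P = Z 1)"
proof -
  obtain s where s: "1 \<le> s" "s < K" "P \<in> seg_pts Z s" using core_seg[OF P] by blast
  obtain u where u: "0 \<le> u" "u \<le> 1"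
    "real (fst P) = (1-u) * real (fst (Z s)) + u * real (fst (Z (Suc s)))"
    "real (snd P) = (1-u) * real (snd (Z s)) + u * real (snd (Z (Suc s)))"
    using s(3) unfolding seg_mem by blast
  have y1: "real (snd (Z 1)) \<le> real (snd (Z s))" using y_mono[of 1 s] s by (cases "s = 1") auto
  have y2: "real (snd (Z 1)) < real (snd (Z (Suc s)))" using y_mono[of 1 "Suc s"] s by auto
  have "(1-u) * real (snd (Z 1)) + u * real (snd (Z 1)) \<le> real (snd P)"
    unfolding u(4) using y1 y2 u(1,2) by (intro add_mono mult_left_mono) auto
  hence le: "snd (Z 1) \<le> snd P" by (simp add: algebra_simps)
  have "P = Z 1" if h: "snd P = snd (Z 1)"
  proof -
    have "(1-u) * (real (snd (Z s)) - snd (Z 1)) + u * (real (snd (Z (Suc s))) - snd (Z 1)) = 0"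
      using h u(4) by (simp add: algebra_simps)
    moreover have "(1-u) * (real (snd (Z s)) - snd (Z 1)) \<ge> 0" using y1 u by auto
    moreover have "u * (real (snd (Z (Suc s))) - snd (Z 1)) \<ge> 0" using y2 u by auto
    ultimately have "u * (real (snd (Z (Suc s))) - snd (Z 1)) = 0" by linarith
    hence u0: "u = 0" using y2 by auto
    hence "real (snd (Z s)) = snd (Z 1)" using h u(4) by auto
    hence "s = 1" using y_mono[of 1 s] s by (cases "s = 1") auto
    thus ?thesis using u0 u(3,4) by (auto simp: prod_eq_iff)
  qed
  thus ?thesis using le by auto
qed

lemma core_x: assumes P: "P \<in> core_pts K Z"
  shows "fst (Z K) \<le> fst P \<and> (fst P = fst (Z K) \<longrightarrow> P = Z K)"
proof -
  obtain s where s: "1 \<le> s" "s < K" "P \<in> seg_pts Z s" using core_seg[OF P] by blast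
  obtain u where u: "0 \<le> u" "u \<le> 1"
    "real (fst P) = (1-u) * real (fst (Z s)) + u * real (fst (Z (Suc s)))"
    "real (snd P) = (1-u) * real (snd (Z s)) + u * real (snd (Z (Suc s)))"
    using s(3) unfolding seg_mem by blast
  have y1: "real (fst (Z K)) < real (fst (Z s))" using x_mono[of s K] s by auto
  have y2: "real (fst (Z K)) \<le> real (fst (Z (Suc s)))" using x_mono[of "Suc s" K] s
    by (cases "Suc s = K") auto
  have "(1-u) * real (fst (Z K)) + u * real (fst (Z K)) \<le> real (fst P)"
    unfolding u(3) using y1 y2 u(1,2) by (intro add_mono mult_left_mono) auto
  hence le: "fst (Z K) \<le> fst P" by (simp add: algebra_simps)
  have "P = Z K" if h: "fst P = fst (Z K)"
  proof -
    have "(1-u) * (real (fst (Z s)) - fst (Z K)) + u * (real (fst (Z (Suc s))) - fst (Z K)) = 0"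
      using h u(3) by (simp add: algebra_simps)
    moreover have "(1-u) * (real (fst (Z s)) - fst (Z K)) \<ge> 0" using y1 u by auto
    moreover have "u * (real (fst (Z (Suc s))) - fst (Z K)) \<ge> 0" using y2 u by auto
    ultimately have "(1-u) * (real (fst (Z s)) - fst (Z K)) = 0" by linarith
    hence u0: "u = 1" using y1 by auto
    hence "real (fst (Z (Suc s))) = fst (Z K)" using h u(3) by auto
    hence "Suc s = K" using x_mono[of "Suc s" K] s by (cases "Suc s = K") auto
    thus ?thesis using u0 u(3,4) by (auto simp: prod_eq_iff)
  qed
  thus ?thesis using le by auto
qed

end



context LL begin

definition Qf :: "nat \<Rightarrow> real \<Rightarrow> real \<Rightarrow> complex" where
  "Qf t m n = (\<Sum>P\<in>seg_pts Z t. c P * (2 * of_real pi * \<i>) ^ (fst P + snd P)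
      * of_real m ^ (fst P - fst (Z (Suc t))) * of_real n ^ (snd P - snd (Z t)))"

lemma seg_facts:
  assumes t: "1 \<le> t" "t < K" and P: "P \<in> seg_pts Z t"
  shows "fst (Z (Suc t)) \<le> fst P" "snd (Z t) \<le> snd P"
    "nat (be t) * (fst P - fst (Z (Suc t))) + nat (al t) * (snd P - snd (Z t)) = nat (al t) * nat (be t)"
proof -
  obtain u where u: "0 \<le> u" "u \<le> 1"
    "real (fst P) = (1-u) * real (fst (Z t)) + u * real (fst (Z (Suc t)))"
    "real (snd P) = (1-u) * real (snd (Z t)) + u * real (snd (Z (Suc t)))"
    using P unfolding seg_mem by blast
  have ch: "al t > 0" "be t > 0" using chain t by auto
  have xl: "real (fst (Z (Suc t))) \<le> real (fst (Z t))" "real (snd (Z t)) \<le> real (snd (Z (Suc t)))"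
    using ch unfolding al_def be_def xx_def yy_def by auto
  have "(1-u) * real (fst (Z (Suc t))) + u * real (fst (Z (Suc t))) \<le> real (fst P)"
    unfolding u(3) using xl u(1,2) by (intro add_mono mult_left_mono) auto
  thus x1: "fst (Z (Suc t)) \<le> fst P" by (simp add: algebra_simps)
  have "(1-u) * real (snd (Z t)) + u * real (snd (Z t)) \<le> real (snd P)"
    unfolding u(4) using xl u(1,2) by (intro add_mono mult_left_mono) auto
  thus y0: "snd (Z t) \<le> snd P" by (simp add: algebra_simps)
  have "lf t P = lf t (Z t)"
  proof -
    obtain v where v: "real_of_int (lf t P) = (1-v) * real_of_int (lf t (Z t)) + v * real_of_int (lf t (Z (Suc t)))"
      using seg_lf[OF P, of t] by blast
    hence "real_of_int (lf t P) = real_of_int (lf t (Z t))" unfolding lf_same by (simp add: algebra_simps)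
    thus ?thesis by simp
  qed
  hence "be t * int (fst P) + al t * int (snd P) = be t * xx t + al t * yy t"
    unfolding lf_def xx_def yy_def by simp
  hence "be t * (int (fst P) - xx (Suc t)) + al t * (int (snd P) - yy t) = al t * be t"
    unfolding al_def be_def by (simp add: algebra_simps)
  hence "int (nat (be t) * (fst P - fst (Z (Suc t))) + nat (al t) * (snd P - snd (Z t))) = int (nat (al t) * nat (be t))"
    using x1 y0 ch unfolding xx_def yy_def by (simp add: of_nat_diff)
  thus "nat (be t) * (fst P - fst (Z (Suc t))) + nat (al t) * (snd P - snd (Z t)) = nat (al t) * nat (be t)"
    by (simp only: of_nat_eq_iff)
qed

lemma seg_fst_eq: assumes t: "1 \<le> t" "t < K" and P: "P \<in> seg_pts Z t"
  and h: "fst P = fst (Z (Suc t))" shows "P = Z (Suc t)"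
proof -
  have ch: "al t > 0" "be t > 0" using chain t by auto
  have "nat (al t) * (snd P - snd (Z t)) = nat (al t) * nat (be t)" using seg_facts[OF t P] h by simp
  hence "snd P - snd (Z t) = nat (be t)" using ch by simp
  hence "snd P = snd (Z (Suc t))" using seg_facts(2)[OF t P] ch unfolding be_def yy_def by auto
  thus ?thesis using h by (simp add: prod_eq_iff)
qed

lemma seg_snd_eq: assumes t: "1 \<le> t" "t < K" and P: "P \<in> seg_pts Z t"
  and h: "snd P = snd (Z t)" shows "P = Z t"
proof -
  have ch: "al t > 0" "be t > 0" using chain t by auto
  have "nat (be t) * (fst P - fst (Z (Suc t))) = nat (al t) * nat (be t)" using seg_facts[OF t P] h by simp
  hence "fst P - fst (Z (Suc t)) = nat (al t)" using ch by simp
  hence "fst P = fst (Z t)" using seg_facts(1)[OF t P] ch unfolding al_def xx_def by auto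
  thus ?thesis using h by (simp add: prod_eq_iff)
qed

lemma seg_finite: "finite (seg_pts Z t)"
proof -
  have "seg_pts Z t \<subseteq> {..fst (Z t) + fst (Z (Suc t))} \<times> {..snd (Z t) + snd (Z (Suc t))}"
  proof
    fix P assume "P \<in> seg_pts Z t"
    then obtain u where u: "0 \<le> u" "u \<le> 1"
      "real (fst P) = (1-u) * real (fst (Z t)) + u * real (fst (Z (Suc t)))"
      "real (snd P) = (1-u) * real (snd (Z t)) + u * real (snd (Z (Suc t)))"
      unfolding seg_mem by blast
    have "(1-u) * real (fst (Z t)) + u * real (fst (Z (Suc t))) \<le> 1 * real (fst (Z t)) + 1 * real (fst (Z (Suc t)))"
      using u(1,2) by (intro add_mono mult_right_mono) auto
    moreover have "(1-u) * real (snd (Z t)) + u * real (snd (Z (Suc t))) \<le> 1 * real (snd (Z t)) + 1 * real (snd (Z (Suc t)))"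
      using u(1,2) by (intro add_mono mult_right_mono) auto
    ultimately show "P \<in> {..fst (Z t) + fst (Z (Suc t))} \<times> {..snd (Z t) + snd (Z (Suc t))}"
      using u(3,4) by (cases P) auto
  qed
  thus ?thesis by (rule finite_subset) auto
qed

lemma core_finite: "finite (core_pts K Z)"
  unfolding core_pts_def using seg_finite by auto

lemma char_factor: assumes t: "1 \<le> t" "t < K"
  shows "char_poly (seg_pts Z t) c m n = of_real m ^ fst (Z (Suc t)) * of_real n ^ snd (Z t) * Qf t m n"
  unfolding char_poly_def Qf_def sum_distrib_left
proof (rule sum.cong[OF refl])
  fix P assume P: "P \<in> seg_pts Z t"
  define p where "p = fst P - fst (Z (Suc t))"
  define q where "q = snd P - snd (Z t)"
  have fp: "fst P = fst (Z (Suc t)) + p" and sq: "snd P = snd (Z t) + q"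
    using seg_facts[OF t P] unfolding p_def q_def by auto
  show "c P * (2 * complex_of_real pi * \<i> * complex_of_real m) ^ fst P *
         (2 * complex_of_real pi * \<i> * complex_of_real n) ^ snd P =
         complex_of_real m ^ fst (Z (Suc t)) * complex_of_real n ^ snd (Z t) *
         (c P * (2 * complex_of_real pi * \<i>) ^ (fst P + snd P) *
          complex_of_real m ^ (fst P - fst (Z (Suc t))) *
          complex_of_real n ^ (snd P - snd (Z t)))"
    unfolding p_def[symmetric] q_def[symmetric] fp sq
    by (simp add: power_mult_distrib power_add algebra_simps)
qed

lemma Qf_hom: assumes t: "1 \<le> t" "t < K"
  shows "Qf t (l ^ nat (be t) * m) (l ^ nat (al t) * n) = of_real l ^ (nat (al t) * nat (be t)) * Qf t m n"
  unfolding Qf_def sum_distrib_left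
proof (rule sum.cong[OF refl])
  fix P assume P: "P \<in> seg_pts Z t"
  define p where "p = fst P - fst (Z (Suc t))"
  define q where "q = snd P - snd (Z t)"
  define a where "a = nat (al t)"
  define b where "b = nat (be t)"
  have e: "a * b = b * p + a * q" using seg_facts(3)[OF t P] unfolding p_def q_def a_def b_def by simp
  have "(complex_of_real l ^ b * complex_of_real m) ^ p * (complex_of_real l ^ a * complex_of_real n) ^ q
      = complex_of_real l ^ (a * b) * (complex_of_real m ^ p * complex_of_real n ^ q)"
    unfolding e power_add power_mult power_mult_distrib by (simp add: algebra_simps)
  thus "c P * (2 * complex_of_real pi * \<i>) ^ (fst P + snd P) *
         complex_of_real (l ^ nat (be t) * m) ^ (fst P - fst (Z (Suc t))) *
         complex_of_real (l ^ nat (al t) * n) ^ (snd P - snd (Z t)) =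
         complex_of_real l ^ (nat (al t) * nat (be t)) *
         (c P * (2 * complex_of_real pi * \<i>) ^ (fst P + snd P) *
          complex_of_real m ^ (fst P - fst (Z (Suc t))) *
          complex_of_real n ^ (snd P - snd (Z t)))"
    unfolding p_def[symmetric] q_def[symmetric] a_def[symmetric] b_def[symmetric]
    by (simp add: algebra_simps)
qed

lemma Qf_m0: assumes t: "1 \<le> t" "t < K" and n: "n \<noteq> 0"
  shows "Qf t 0 n \<noteq> 0"
proof -
  let ?f = "\<lambda>P. c P * (2 * of_real pi * \<i>) ^ (fst P + snd P)
      * of_real 0 ^ (fst P - fst (Z (Suc t))) * of_real n ^ (snd P - snd (Z t))"
  have "Qf t 0 n = ?f (Z (Suc t)) + sum ?f (seg_pts Z t - {Z (Suc t)})"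
    unfolding Qf_def using Z_in_seg(2)[of t] seg_finite by (simp add: sum.remove)
  also have "sum ?f (seg_pts Z t - {Z (Suc t)}) = 0"
  proof (rule sum.neutral, rule ballI)
    fix P assume "P \<in> seg_pts Z t - {Z (Suc t)}"
    hence "fst P \<noteq> fst (Z (Suc t))" "fst (Z (Suc t)) \<le> fst P" using seg_fst_eq[OF t] seg_facts(1)[OF t] by blast+
    hence "fst P - fst (Z (Suc t)) \<noteq> 0" by auto
    thus "?f P = 0" by simp
  qed
  finally have "Qf t 0 n = ?f (Z (Suc t))" by simp
  moreover have "c (Z (Suc t)) \<noteq> 0" using core t unfolding core_operator_def by auto
  ultimately show ?thesis using n by simp
qed

lemma Qf_n0: assumes t: "1 \<le> t" "t < K" and m: "m \<noteq> 0"
  shows "Qf t m 0 \<noteq> 0"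
proof -
  let ?f = "\<lambda>P. c P * (2 * of_real pi * \<i>) ^ (fst P + snd P)
      * of_real m ^ (fst P - fst (Z (Suc t))) * of_real 0 ^ (snd P - snd (Z t))"
  have "Qf t m 0 = ?f (Z t) + sum ?f (seg_pts Z t - {Z t})"
    unfolding Qf_def using Z_in_seg(1)[of t] seg_finite by (simp add: sum.remove)
  also have "sum ?f (seg_pts Z t - {Z t}) = 0"
  proof (rule sum.neutral, rule ballI)
    fix P assume "P \<in> seg_pts Z t - {Z t}"
    hence "snd P \<noteq> snd (Z t)" "snd (Z t) \<le> snd P" using seg_snd_eq[OF t] seg_facts(2)[OF t] by blast+
    hence "snd P - snd (Z t) \<noteq> 0" by auto
    thus "?f P = 0" by simp
  qed
  finally have "Qf t m 0 = ?f (Z t)" by simp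
  moreover have "c (Z t) \<noteq> 0" using core t unfolding core_operator_def by auto
  ultimately show ?thesis using m by simp
qed

lemma Qf_nz: assumes t: "1 \<le> t" "t < K" and mn: "m \<noteq> 0 \<or> n \<noteq> 0"
  shows "Qf t m n \<noteq> 0"
proof (cases "m = 0")
  case True then show ?thesis using Qf_m0[OF t] mn by auto
next
  case m: False
  show ?thesis
  proof (cases "n = 0")
    case True then show ?thesis using Qf_n0[OF t m] by auto
  next
    case False
    have "char_poly (seg_pts Z t) c m n \<noteq> 0" using ell t m False unfolding elliptic_def by auto
    then show ?thesis unfolding char_factor[OF t] by auto
  qed
qed

lemma Qf_lower: assumes t: "1 \<le> t" "t < K"
  shows "\<exists>\<delta>>0. \<forall>m n. \<delta> * max (\<bar>m\<bar> ^ nat (al t)) (\<bar>n\<bar> ^ nat (be t)) \<le> cmod (Qf t m n)"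
proof -
  define a where "a = nat (al t)"
  define b where "b = nat (be t)"
  have ab: "a > 0" "b > 0" using chain[OF t] unfolding a_def b_def by auto
  define G where "G = {z::real\<times>real. fst z ^ (2*a) + snd z ^ (2*b) = 1}"
  have Gb: "\<bar>fst z\<bar> \<le> 1 \<and> \<bar>snd z\<bar> \<le> 1" if z: "z \<in> G" for z
  proof -
    have e: "\<bar>fst z\<bar> ^ (2*a) + \<bar>snd z\<bar> ^ (2*b) = 1" using z unfolding G_def
      by (simp add: power_even_abs)
    have "\<bar>fst z\<bar> \<le> 1"
    proof (rule ccontr)
      assume "\<not> \<bar>fst z\<bar> \<le> 1"
      hence "1 < \<bar>fst z\<bar> ^ (2*a)" using ab by (intro one_less_power) auto
      moreover have "0 \<le> \<bar>snd z\<bar> ^ (2*b)" by simp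
      ultimately show False using e by linarith
    qed
    moreover have "\<bar>snd z\<bar> \<le> 1"
    proof (rule ccontr)
      assume "\<not> \<bar>snd z\<bar> \<le> 1"
      hence "1 < \<bar>snd z\<bar> ^ (2*b)" using ab by (intro one_less_power) auto
      moreover have "0 \<le> \<bar>fst z\<bar> ^ (2*a)" by simp
      ultimately show False using e by linarith
    qed
    ultimately show ?thesis by simp
  qed
  have cl: "closed G" unfolding G_def
    by (intro closed_Collect_eq continuous_intros)
  have bd: "bounded G"
  proof (rule bounded_subset[OF bounded_cball[of 0 2]])
    show "G \<subseteq> cball 0 2"
    proof
      fix z assume z: "z \<in> G"
      have "norm (fst z, snd z) \<le> norm (fst z) + norm (snd z)" by (rule norm_Pair_le)
      thus "z \<in> cball 0 2" using Gb[OF z] by auto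
    qed
  qed
  have cpt: "compact G" using cl bd compact_eq_bounded_closed by blast
  have "(1::real, 0::real) \<in> G" using ab unfolding G_def by simp
  hence ne: "G \<noteq> {}" by blast
  have cont: "continuous_on G (\<lambda>z. cmod (Qf t (fst z) (snd z)))"
    unfolding Qf_def by (intro continuous_intros)
  obtain z0 where z0: "z0 \<in> G" "\<And>z. z \<in> G \<Longrightarrow> cmod (Qf t (fst z0) (snd z0)) \<le> cmod (Qf t (fst z) (snd z))"
    using continuous_attains_inf[OF cpt ne cont] by blast
  define \<delta> where "\<delta> = cmod (Qf t (fst z0) (snd z0))"
  have "fst z0 \<noteq> 0 \<or> snd z0 \<noteq> 0" using z0(1) ab unfolding G_def by (auto simp: power_0_left)
  hence dpos: "\<delta> > 0" unfolding \<delta>_def using Qf_nz[OF t] by auto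
  have main: "\<delta> * max (\<bar>m\<bar> ^ a) (\<bar>n\<bar> ^ b) \<le> cmod (Qf t m n)" for m n
  proof (cases "m = 0 \<and> n = 0")
    case True then show ?thesis using ab by (simp add: power_0_left)
  next
    case False
    define \<rho> where "\<rho> = m ^ (2*a) + n ^ (2*b)"
    have "m ^ (2*a) \<ge> 0" "n ^ (2*b) \<ge> 0" by (simp_all add: power_mult zero_le_power_eq)
    moreover have "m ^ (2*a) > 0 \<or> n ^ (2*b) > 0" using False
      by (auto simp: power_mult zero_less_power_eq)
    ultimately have rpos: "\<rho> > 0" unfolding \<rho>_def by linarith
    define l where "l = (1/\<rho>) powr (1 / real (2*a*b))"
    have lpos: "l > 0" unfolding l_def using rpos by simp
    have l2: "l ^ (2*a*b) = 1/\<rho>"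
    proof -
      have "l ^ (2*a*b) = l powr real (2*a*b)" by (rule powr_realpow[OF lpos, symmetric])
      also have "\<dots> = (1/\<rho>) powr (1 / real (2*a*b) * real (2*a*b))" unfolding l_def powr_powr ..
      also have "\<dots> = 1/\<rho>" using ab rpos by simp
      finally show ?thesis .
    qed
    define z where "z = (l ^ b * m, l ^ a * n)"
    have "fst z ^ (2*a) + snd z ^ (2*b) = l ^ (2*a*b) * \<rho>"
      unfolding z_def \<rho>_def by (simp add: power_mult_distrib power_mult[symmetric] algebra_simps)
    hence zG: "z \<in> G" unfolding G_def using l2 rpos by simp
    have "\<delta> \<le> cmod (Qf t (fst z) (snd z))" unfolding \<delta>_def using z0(2)[OF zG] .
    also have "Qf t (fst z) (snd z) = of_real l ^ (a*b) * Qf t m n"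
      unfolding z_def a_def b_def using Qf_hom[OF t] by simp
    finally have d1: "\<delta> \<le> l ^ (a*b) * cmod (Qf t m n)" using lpos by (simp add: norm_mult norm_power)
    have "\<bar>fst z\<bar> ^ a \<le> 1" "\<bar>snd z\<bar> ^ b \<le> 1" using Gb[OF zG] by (auto intro: power_le_one)
    hence "l ^ (a*b) * \<bar>m\<bar> ^ a \<le> 1" "l ^ (a*b) * \<bar>n\<bar> ^ b \<le> 1"
      unfolding z_def using lpos by (auto simp: abs_mult power_mult_distrib power_mult[symmetric] mult.commute)
    hence "l ^ (a*b) * max (\<bar>m\<bar> ^ a) (\<bar>n\<bar> ^ b) \<le> 1" by (simp add: max_def)
    hence "\<delta> * (l ^ (a*b) * max (\<bar>m\<bar> ^ a) (\<bar>n\<bar> ^ b)) \<le> \<delta>" using dpos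
      by (simp add: mult_left_le)
    hence "l ^ (a*b) * (\<delta> * max (\<bar>m\<bar> ^ a) (\<bar>n\<bar> ^ b)) \<le> l ^ (a*b) * cmod (Qf t m n)"
      using d1 by (simp add: algebra_simps)
    thus ?thesis using lpos by simp
  qed
  show ?thesis using dpos main unfolding a_def b_def by blast
qed

end



lemma finite_delta:
  assumes "finite I" "\<forall>t\<in>I. \<exists>\<delta>>0. Q t \<delta>"
    "\<And>t \<delta> \<delta>'. Q t \<delta> \<Longrightarrow> 0 < \<delta>' \<Longrightarrow> \<delta>' \<le> \<delta> \<Longrightarrow> Q t \<delta>'"
  shows "\<exists>\<delta>>0. \<forall>t\<in>I. Q t (\<delta>::real)"
  using assms(1,2)
proof (induction I rule: finite_induct)
  case empty then show ?case by (auto intro: exI[of _ 1])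
next
  case (insert x F)
  obtain d1 where d1: "d1 > 0" "\<forall>t\<in>F. Q t d1" using insert by auto
  obtain d2 where d2: "d2 > 0" "Q x d2" using insert by auto
  have "min d1 d2 > 0" using d1 d2 by auto
  moreover have "\<forall>t\<in>insert x F. Q t (min d1 d2)"
    using d1 d2 assms(3) by (auto simp: min_def)
  ultimately show ?case by blast
qed

lemma comb:
  fixes k1 k2 u1 u2 v1 v2 d1 d2 :: real
  assumes "k1 \<ge> 0" "k2 \<ge> 0" "u1 \<le> v1 - d1" "u2 \<le> v2 - d2"
  shows "k1 * u1 + k2 * u2 \<le> k1 * v1 + k2 * v2 - (k1 * d1 + k2 * d2)"
proof -
  have "k1 * u1 \<le> k1 * (v1 - d1)" using assms by (intro mult_left_mono) auto
  moreover have "k2 * u2 \<le> k2 * (v2 - d2)" using assms by (intro mult_left_mono) auto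
  ultimately show ?thesis by (simp add: algebra_simps)
qed

lemma disc_ivt: "(D::nat \<Rightarrow> real) 1 > 0 \<Longrightarrow> 1 \<le> k \<Longrightarrow> D k \<le> 0 \<Longrightarrow> \<exists>s. 1 \<le> s \<and> s < k \<and> D s > 0 \<and> D (Suc s) \<le> 0"
proof (induction k)
  case 0 then show ?case by simp
next
  case (Suc k)
  show ?case
  proof (cases "D k > 0")
    case True then show ?thesis using Suc by (intro exI[of _ k]) (cases k; auto)
  next
    case False
    then have "k \<noteq> 1 \<and> k \<ge> 1" using Suc by (cases "k = 0") auto
    then show ?thesis using Suc False by force
  qed
qed

context LL begin

definition mu :: "nat \<times> nat \<Rightarrow> real \<Rightarrow> real \<Rightarrow> real" where
  "mu P m n = \<bar>m\<bar> ^ fst P * \<bar>n\<bar> ^ snd P"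

definition fl :: "nat \<times> nat \<Rightarrow> real \<Rightarrow> real \<Rightarrow> real" where
  "fl P a b = real (fst P) * a + real (snd P) * b"

definition Vb :: real where "Vb = real (fst (Z 1) + snd (Z K) + 1)"

lemma mu_nn: "mu P m n \<ge> 0" unfolding mu_def by simp

lemma seg_lower: assumes t: "1 \<le> t" "t < K"
  shows "\<exists>\<delta>>0. \<forall>m n. \<delta> * mu (Z t) m n \<le> cmod (char_poly (seg_pts Z t) c m n)
     \<and> \<delta> * mu (Z (Suc t)) m n \<le> cmod (char_poly (seg_pts Z t) c m n)"
proof -
  obtain \<delta> where d: "\<delta>>0" "\<And>m n. \<delta> * max (\<bar>m\<bar>^nat(al t)) (\<bar>n\<bar>^nat(be t)) \<le> cmod (Qf t m n)"
    using Qf_lower[OF t] by blast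
  have fx: "fst (Z t) = fst (Z (Suc t)) + nat (al t)" and sy: "snd (Z (Suc t)) = snd (Z t) + nat (be t)"
    using chain[OF t] unfolding al_def be_def xx_def yy_def by auto
  have "\<delta> * mu (Z t) m n \<le> cmod (char_poly (seg_pts Z t) c m n)
     \<and> \<delta> * mu (Z (Suc t)) m n \<le> cmod (char_poly (seg_pts Z t) c m n)" for m n
  proof -
    define W where "W = \<bar>m\<bar> ^ fst (Z (Suc t)) * \<bar>n\<bar> ^ snd (Z t)"
    have W0: "W \<ge> 0" unfolding W_def by simp
    have cp: "cmod (char_poly (seg_pts Z t) c m n) = W * cmod (Qf t m n)"
      unfolding char_factor[OF t] W_def by (simp add: norm_mult norm_power)
    have "\<delta> * \<bar>m\<bar> ^ nat (al t) \<le> \<delta> * max (\<bar>m\<bar>^nat(al t)) (\<bar>n\<bar>^nat(be t))"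
      using d(1) by (intro mult_left_mono) auto
    hence e1: "\<delta> * \<bar>m\<bar> ^ nat (al t) \<le> cmod (Qf t m n)" using d(2)[of m n] by linarith
    have "\<delta> * \<bar>n\<bar> ^ nat (be t) \<le> \<delta> * max (\<bar>m\<bar>^nat(al t)) (\<bar>n\<bar>^nat(be t))"
      using d(1) by (intro mult_left_mono) auto
    hence e2: "\<delta> * \<bar>n\<bar> ^ nat (be t) \<le> cmod (Qf t m n)" using d(2)[of m n] by linarith
    have i1: "W * (\<delta> * \<bar>m\<bar> ^ nat (al t)) \<le> W * cmod (Qf t m n)"
      using W0 e1 by (intro mult_left_mono) auto
    have i2: "W * (\<delta> * \<bar>n\<bar> ^ nat (be t)) \<le> W * cmod (Qf t m n)"
      using W0 e2 by (intro mult_left_mono) auto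
    have q1: "\<delta> * mu (Z t) m n = W * (\<delta> * \<bar>m\<bar> ^ nat (al t))"
      unfolding mu_def W_def fx power_add by (simp add: algebra_simps)
    have q2: "\<delta> * mu (Z (Suc t)) m n = W * (\<delta> * \<bar>n\<bar> ^ nat (be t))"
      unfolding mu_def W_def sy power_add by (simp add: algebra_simps)
    show ?thesis unfolding cp q1 q2 using i1 i2 by simp
  qed
  thus ?thesis using d(1) by blast
qed

lemma seg_lower_unif:
  "\<exists>\<delta>>0. \<forall>t\<in>{1..<K}. \<forall>m n. \<delta> * mu (Z t) m n \<le> cmod (char_poly (seg_pts Z t) c m n)
     \<and> \<delta> * mu (Z (Suc t)) m n \<le> cmod (char_poly (seg_pts Z t) c m n)"
proof (rule finite_delta)
  show "finite {1..<K}" by simp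
  show "\<forall>t\<in>{1..<K}. \<exists>\<delta>>0. \<forall>m n. \<delta> * mu (Z t) m n \<le> cmod (char_poly (seg_pts Z t) c m n)
     \<and> \<delta> * mu (Z (Suc t)) m n \<le> cmod (char_poly (seg_pts Z t) c m n)"
    using seg_lower by auto
  fix t and \<delta> \<delta>' :: real
  assume h: "\<forall>m n. \<delta> * mu (Z t) m n \<le> cmod (char_poly (seg_pts Z t) c m n)
     \<and> \<delta> * mu (Z (Suc t)) m n \<le> cmod (char_poly (seg_pts Z t) c m n)" "0 < \<delta>'" "\<delta>' \<le> \<delta>"
  show "\<forall>m n. \<delta>' * mu (Z t) m n \<le> cmod (char_poly (seg_pts Z t) c m n)
     \<and> \<delta>' * mu (Z (Suc t)) m n \<le> cmod (char_poly (seg_pts Z t) c m n)"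
  proof (intro allI)
    fix m n
    have "\<delta>' * mu (Z t) m n \<le> \<delta> * mu (Z t) m n" "\<delta>' * mu (Z (Suc t)) m n \<le> \<delta> * mu (Z (Suc t)) m n"
      using h(3) by (simp_all add: mult_right_mono mu_nn)
    moreover have "\<delta> * mu (Z t) m n \<le> cmod (char_poly (seg_pts Z t) c m n)"
      "\<delta> * mu (Z (Suc t)) m n \<le> cmod (char_poly (seg_pts Z t) c m n)" using h(1) by blast+
    ultimately show "\<delta>' * mu (Z t) m n \<le> cmod (char_poly (seg_pts Z t) c m n)
     \<and> \<delta>' * mu (Z (Suc t)) m n \<le> cmod (char_poly (seg_pts Z t) c m n)" by linarith
  qed
qed

lemma lf_real: "real_of_int (lf t P) = real_of_int (be t) * real (fst P) + real_of_int (al t) * real (snd P)"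
  unfolding lf_def by simp

lemma core_lf_real: assumes t: "1 \<le> t" "t < K" and P: "P \<in> core_pts K Z"
  shows "real_of_int (lf t P) \<le> real_of_int (lf t (Z t)) - (if P \<in> seg_pts Z t then 0 else 1)"
proof -
  have "lf t P \<le> lf t (Z t) - (if P \<in> seg_pts Z t then 0 else 1)" using core_lf[OF t P] by auto
  thus ?thesis by (simp split: if_splits)
qed

lemma al_bd: "1 \<le> t \<Longrightarrow> t < K \<Longrightarrow> 0 < real_of_int (al t) \<and> real_of_int (al t) \<le> Vb"
proof -
  assume t: "1 \<le> t" "t < K"
  have "fst (Z t) \<le> fst (Z 1)" using x_mono[of 1 t] t by (cases "t = 1") auto
  thus ?thesis using chain[OF t] unfolding al_def xx_def Vb_def by auto
qed

lemma be_bd: "1 \<le> t \<Longrightarrow> t < K \<Longrightarrow> 0 < real_of_int (be t) \<and> real_of_int (be t) \<le> Vb"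
proof -
  assume t: "1 \<le> t" "t < K"
  have "snd (Z (Suc t)) \<le> snd (Z K)" using y_mono[of "Suc t" K] t by (cases "Suc t = K") auto
  thus ?thesis using chain[OF t] unfolding be_def yy_def Vb_def by auto
qed

end



lemma gap_generic:
  fixes F L1 L2 d1 d2 :: "'a \<Rightarrow> real"
  assumes "k1 \<ge> 0" "k2 \<ge> 0" "\<And>P. F P = k1 * L1 P + k2 * L2 P"
    "L1 P \<le> L1 Zs - d1 P" "L2 P \<le> L2 Zs - d2 P"
  shows "F P \<le> F Zs - (k1 * d1 P + k2 * d2 P)"
  using comb[OF assms(1,2,4,5)] assms(3)[of P] assms(3)[of Zs] by simp

context LL begin

lemma geo: assumes pos: "max a b > 0"
  shows "\<exists>t. 1 \<le> t \<and> t < K \<and> (\<exists>Zs\<in>{Z t, Z (Suc t)}. \<exists>g. max a b \<le> 2 * Vb * g \<and>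
     (\<forall>P\<in>core_pts K Z. fl P a b \<le> fl Zs a b) \<and> (\<forall>P\<in>core_pts K Z - seg_pts Z t. fl P a b \<le> fl Zs a b - g))"
proof -
  define D where "D s = b * real_of_int (be s) - a * real_of_int (al s)" for s
  have K1: "1 < K" using K2 by auto
  have Vb0: "Vb > 0" unfolding Vb_def by simp
  define dy where "dy P = (if P = Z 1 then 0 else 1::real)" for P
  define dx where "dx P = (if P = Z K then 0 else 1::real)" for P
  define ds where "ds s P = (if P \<in> seg_pts Z s then 0 else 1::real)" for s P
  have Ly: "- real (snd P) \<le> - real (snd (Z 1)) - dy P" if "P \<in> core_pts K Z" for P
  proof -
    have "snd (Z 1) \<le> snd P \<and> (snd P = snd (Z 1) \<longrightarrow> P = Z 1)" using core_y[OF that] .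
    thus ?thesis unfolding dy_def by (cases "P = Z 1") auto
  qed
  have Lx: "- real (fst P) \<le> - real (fst (Z K)) - dx P" if "P \<in> core_pts K Z" for P
  proof -
    have "fst (Z K) \<le> fst P \<and> (fst P = fst (Z K) \<longrightarrow> P = Z K)" using core_x[OF that] .
    thus ?thesis unfolding dx_def by (cases "P = Z K") auto
  qed
  have Ls: "real_of_int (lf s P) \<le> real_of_int (lf s (Z s)) - ds s P"
    if "P \<in> core_pts K Z" "1 \<le> s" "s < K" for P s
    using core_lf_real[OF that(2,3,1)] unfolding ds_def by simp
  have Ls': "real_of_int (lf s P) \<le> real_of_int (lf s (Z (Suc s))) - ds s P"
    if "P \<in> core_pts K Z" "1 \<le> s" "s < K" for P s
    using Ls[OF that] lf_same[of s] by simp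
  have dnn: "dy P \<ge> 0" "dx P \<ge> 0" "ds s P \<ge> 0" for P s unfolding dy_def dx_def ds_def by auto
  show ?thesis
  proof (cases "D 1 \<le> 0")
    case True
    define \<alpha> where "\<alpha> = real_of_int (al 1)"
    define \<beta> where "\<beta> = real_of_int (be 1)"
    have ab: "0<\<alpha>" "\<alpha> \<le> Vb" "0 < \<beta>" "\<beta> \<le> Vb" using al_bd[of 1] be_bd[of 1] K1 unfolding \<alpha>_def \<beta>_def by auto
    have Dd: "D 1 = b * \<beta> - a * \<alpha>" unfolding D_def \<alpha>_def \<beta>_def ..
    have a0: "a \<ge> 0"
    proof (rule ccontr)
      assume na: "\<not> a \<ge> 0"
      hence "b > 0" using pos by auto
      hence "b * \<beta> > 0" "a * \<alpha> < 0" using ab na by (auto intro: mult_pos_pos mult_neg_pos)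
      thus False using True Dd by linarith
    qed
    define k1 where "k1 = - D 1 / \<beta>"
    define k2 where "k2 = a / \<beta>"
    have k: "k1 \<ge> 0" "k2 \<ge> 0" unfolding k1_def k2_def using True a0 ab by (auto intro: divide_nonpos_pos)
    have ea: "a = k2 * \<beta>" unfolding k2_def using ab by simp
    have eb: "b = k2 * \<alpha> - k1" unfolding k1_def k2_def Dd using ab by (simp add: field_simps)
    have F: "fl P a b = k1 * (- real (snd P)) + k2 * real_of_int (lf 1 P)" for P
      unfolding fl_def lf_real \<alpha>_def[symmetric] \<beta>_def[symmetric]
      by (subst ea, subst eb) (simp add: algebra_simps)
    have G: "fl P a b \<le> fl (Z 1) a b - (k1 * dy P + k2 * ds 1 P)" if P: "P \<in> core_pts K Z" for P
      by (rule gap_generic[OF k F]) (use Ly[OF P] Ls[OF P, of 1] K1 in auto)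
    have "max a b \<le> 2 * Vb * (k1 + k2)"
    proof -
      have "k2 * \<beta> \<le> k2 * Vb" "k2 * \<alpha> \<le> k2 * Vb" using k ab by (auto intro: mult_left_mono)
      moreover have "k1 * Vb \<ge> 0" "k2 * Vb \<ge> 0" using k Vb0 by simp_all
      ultimately show ?thesis using ea eb k by (simp add: algebra_simps)
    qed
    moreover have "\<forall>P\<in>core_pts K Z. fl P a b \<le> fl (Z 1) a b"
    proof
      fix P assume P: "P \<in> core_pts K Z"
      have "k1 * dy P + k2 * ds 1 P \<ge> 0" using k dnn by simp
      thus "fl P a b \<le> fl (Z 1) a b" using G[OF P] by linarith
    qed
    moreover have "\<forall>P\<in>core_pts K Z - seg_pts Z 1. fl P a b \<le> fl (Z 1) a b - (k1 + k2)"
    proof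
      fix P assume P: "P \<in> core_pts K Z - seg_pts Z 1"
      hence "P \<noteq> Z 1" using Z_in_seg(1)[of 1] by auto
      hence "dy P = 1" "ds 1 P = 1" using P unfolding dy_def ds_def by auto
      thus "fl P a b \<le> fl (Z 1) a b - (k1 + k2)" using G[of P] P by simp
    qed
    ultimately show ?thesis using K1 by (intro exI[of _ 1]) blast
  next
    case n1: False
    show ?thesis
    proof (cases "D (K - 1) \<ge> 0")
      case True
      define s where "s = K - 1"
      have s: "1 \<le> s" "s < K" "Suc s = K" unfolding s_def using K1 by auto
      define \<alpha> where "\<alpha> = real_of_int (al s)"
      define \<beta> where "\<beta> = real_of_int (be s)"
      have ab: "0<\<alpha>" "\<alpha> \<le> Vb" "0 < \<beta>" "\<beta> \<le> Vb" using al_bd[of s] be_bd[of s] s unfolding \<alpha>_def \<beta>_def by auto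
      have Dd: "D s = b * \<beta> - a * \<alpha>" unfolding D_def \<alpha>_def \<beta>_def ..
      have b0: "b \<ge> 0"
      proof (rule ccontr)
        assume nb: "\<not> b \<ge> 0"
        hence "a > 0" using pos by auto
        hence "b * \<beta> < 0" "a * \<alpha> > 0" using ab nb by (auto intro: mult_pos_pos mult_neg_pos)
        thus False using True Dd unfolding s_def by linarith
      qed
      define k1 where "k1 = b / \<alpha>"
      define k2 where "k2 = D s / \<alpha>"
      have k: "k1 \<ge> 0" "k2 \<ge> 0" unfolding k1_def k2_def using True b0 ab unfolding s_def by auto
      have eb: "b = k1 * \<alpha>" unfolding k1_def using ab by simp
      have ea: "a = k1 * \<beta> - k2" unfolding k1_def k2_def Dd using ab by (simp add: field_simps)
      have F: "fl P a b = k1 * real_of_int (lf s P) + k2 * (- real (fst P))" for P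
        unfolding fl_def lf_real \<alpha>_def[symmetric] \<beta>_def[symmetric]
        by (subst ea, subst eb) (simp add: algebra_simps)
      have G: "fl P a b \<le> fl (Z K) a b - (k1 * ds s P + k2 * dx P)" if P: "P \<in> core_pts K Z" for P
        by (rule gap_generic[OF k F]) (use Lx[OF P] Ls'[OF P s(1,2)] s(3) in auto)
      have "max a b \<le> 2 * Vb * (k1 + k2)"
      proof -
        have "k1 * \<beta> \<le> k1 * Vb" "k1 * \<alpha> \<le> k1 * Vb" using k ab by (auto intro: mult_left_mono)
        moreover have "k2 * Vb \<ge> 0" "k1 * Vb \<ge> 0" using k Vb0 by simp_all
        ultimately show ?thesis using ea eb k by (simp add: algebra_simps)
      qed
      moreover have "\<forall>P\<in>core_pts K Z. fl P a b \<le> fl (Z K) a b"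
      proof
        fix P assume P: "P \<in> core_pts K Z"
        have "k1 * ds s P + k2 * dx P \<ge> 0" using k dnn by simp
        thus "fl P a b \<le> fl (Z K) a b" using G[OF P] by linarith
      qed
      moreover have "\<forall>P\<in>core_pts K Z - seg_pts Z s. fl P a b \<le> fl (Z K) a b - (k1 + k2)"
      proof
        fix P assume P: "P \<in> core_pts K Z - seg_pts Z s"
        hence "P \<noteq> Z K" using Z_in_seg(2)[of s] s(3) by auto
        hence "dx P = 1" "ds s P = 1" using P unfolding dx_def ds_def by auto
        thus "fl P a b \<le> fl (Z K) a b - (k1 + k2)" using G[of P] P by simp
      qed
      ultimately show ?thesis using s by (intro exI[of _ s]) (metis insertCI)
    next
      case n2: False
      have "K - 1 \<ge> 1" using K1 by auto
      then obtain s where s: "1 \<le> s" "s < K - 1" "D s > 0" "D (Suc s) \<le> 0"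
        using disc_ivt[of D "K - 1"] n1 n2 by auto
      have s1: "Suc s < K" "s < K" using s by auto
      define \<alpha>1 where "\<alpha>1 = real_of_int (al s)"
      define \<beta>1 where "\<beta>1 = real_of_int (be s)"
      define \<alpha>2 where "\<alpha>2 = real_of_int (al (Suc s))"
      define \<beta>2 where "\<beta>2 = real_of_int (be (Suc s))"
      have ab1: "0<\<alpha>1" "\<alpha>1 \<le> Vb" "0 < \<beta>1" "\<beta>1 \<le> Vb"
        using al_bd[of s] be_bd[of s] s1 s unfolding \<alpha>1_def \<beta>1_def by auto
      have ab2: "0<\<alpha>2" "\<alpha>2 \<le> Vb" "0 < \<beta>2" "\<beta>2 \<le> Vb"
        using al_bd[of "Suc s"] be_bd[of "Suc s"] s1 unfolding \<alpha>2_def \<beta>2_def by auto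
      define \<Delta> where "\<Delta> = \<beta>1 * \<alpha>2 - \<beta>2 * \<alpha>1"
      have "be (Suc s) * al s < be s * al (Suc s)" using cross[of s "Suc s"] s s1 by auto
      hence "real_of_int (be (Suc s) * al s) < real_of_int (be s * al (Suc s))" by (simp only: of_int_less_iff)
      hence Dp: "\<Delta> > 0" unfolding \<Delta>_def \<alpha>1_def \<alpha>2_def \<beta>1_def \<beta>2_def by simp
      have D1: "D s = b * \<beta>1 - a * \<alpha>1" unfolding D_def \<alpha>1_def \<beta>1_def ..
      have D2: "D (Suc s) = b * \<beta>2 - a * \<alpha>2" unfolding D_def \<alpha>2_def \<beta>2_def ..
      define k1 where "k1 = - D (Suc s) / \<Delta>"
      define k2 where "k2 = D s / \<Delta>"
      have k: "k1 \<ge> 0" "k2 \<ge> 0" unfolding k1_def k2_def using s Dp by (auto intro: divide_nonpos_pos)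
      have k1D: "k1 * \<Delta> = - D (Suc s)" unfolding k1_def using Dp by simp
      have k2D: "k2 * \<Delta> = D s" unfolding k2_def using Dp by simp
      have "(k1 * \<beta>1 + k2 * \<beta>2) * \<Delta> = (k1 * \<Delta>) * \<beta>1 + (k2 * \<Delta>) * \<beta>2" by (simp add: algebra_simps)
      also have "\<dots> = a * \<Delta>" unfolding k1D k2D unfolding D1 D2 \<Delta>_def by (simp add: algebra_simps)
      finally have ea: "a = k1 * \<beta>1 + k2 * \<beta>2" using Dp by simp
      have "(k1 * \<alpha>1 + k2 * \<alpha>2) * \<Delta> = (k1 * \<Delta>) * \<alpha>1 + (k2 * \<Delta>) * \<alpha>2" by (simp add: algebra_simps)
      also have "\<dots> = b * \<Delta>" unfolding k1D k2D unfolding D1 D2 \<Delta>_def by (simp add: algebra_simps)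
      finally have eb: "b = k1 * \<alpha>1 + k2 * \<alpha>2" using Dp by simp
      have F: "fl P a b = k1 * real_of_int (lf s P) + k2 * real_of_int (lf (Suc s) P)" for P
        unfolding fl_def lf_real \<alpha>1_def[symmetric] \<beta>1_def[symmetric] \<alpha>2_def[symmetric] \<beta>2_def[symmetric]
        by (subst ea, subst eb) (simp add: algebra_simps)
      have G: "fl P a b \<le> fl (Z (Suc s)) a b - (k1 * ds s P + k2 * ds (Suc s) P)" if P: "P \<in> core_pts K Z" for P
        by (rule gap_generic[OF k F]) (use Ls'[OF P s(1) s1(2)] Ls[OF P _ s1(1)] in auto)
      have all: "\<forall>P\<in>core_pts K Z. fl P a b \<le> fl (Z (Suc s)) a b"
      proof
        fix P assume P: "P \<in> core_pts K Z"
        have "k1 * ds s P + k2 * ds (Suc s) P \<ge> 0" using k dnn by simp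
        thus "fl P a b \<le> fl (Z (Suc s)) a b" using G[OF P] by linarith
      qed
      have mx: "max a b \<le> Vb * (k1 + k2)"
      proof -
        have "k1 * \<beta>1 \<le> k1 * Vb" "k1 * \<alpha>1 \<le> k1 * Vb" using k ab1 by (auto intro: mult_left_mono)
        moreover have "k2 * \<beta>2 \<le> k2 * Vb" "k2 * \<alpha>2 \<le> k2 * Vb" using k ab2 by (auto intro: mult_left_mono)
        ultimately show ?thesis using ea eb by (simp add: algebra_simps)
      qed
      show ?thesis
      proof (cases "k2 \<le> k1")
        case True
        have "Vb * (k1 + k2) \<le> 2 * Vb * k1" using True Vb0 by (simp add: algebra_simps)
        hence "max a b \<le> 2 * Vb * k1" using mx by linarith
        moreover have "\<forall>P\<in>core_pts K Z - seg_pts Z s. fl P a b \<le> fl (Z (Suc s)) a b - k1"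
        proof
          fix P assume P: "P \<in> core_pts K Z - seg_pts Z s"
          hence "ds s P = 1" unfolding ds_def by auto
          moreover have "k2 * ds (Suc s) P \<ge> 0" using k dnn by simp
          ultimately show "fl P a b \<le> fl (Z (Suc s)) a b - k1" using G[of P] P by auto
        qed
        ultimately show ?thesis using s s1 all by (intro exI[of _ s]) (metis insertCI)
      next
        case False
        have "Vb * (k1 + k2) \<le> 2 * Vb * k2" using False Vb0 by (simp add: algebra_simps)
        hence "max a b \<le> 2 * Vb * k2" using mx by linarith
        moreover have "\<forall>P\<in>core_pts K Z - seg_pts Z (Suc s). fl P a b \<le> fl (Z (Suc s)) a b - k2"
        proof
          fix P assume P: "P \<in> core_pts K Z - seg_pts Z (Suc s)"
          hence "ds (Suc s) P = 1" unfolding ds_def by auto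
          moreover have "k1 * ds s P \<ge> 0" using k dnn by simp
          ultimately show "fl P a b \<le> fl (Z (Suc s)) a b - k2" using G[of P] P by auto
        qed
        ultimately show ?thesis using s s1 all by (intro exI[of _ "Suc s"] conjI bexI[of _ "Z (Suc s)"] exI[of _ k2]) auto
      qed
    qed
  qed
qed

end



context LL begin

lemma mu_exp: "m \<noteq> 0 \<Longrightarrow> n \<noteq> 0 \<Longrightarrow> mu P m n = exp (fl P (ln \<bar>m\<bar>) (ln \<bar>n\<bar>))"
  unfolding mu_def fl_def exp_add exp_of_nat_mult by simp

lemma term_norm: "cmod (c P * (2 * of_real pi * \<i> * of_real m) ^ fst P * (2 * of_real pi * \<i> * of_real n) ^ snd P)
   = cmod (c P) * (2*pi) ^ (fst P + snd P) * mu P m n"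
  unfolding mu_def by (simp add: norm_mult norm_power power_add power_mult_distrib abs_mult mult_ac)

lemma main_nz: "\<exists>C M. M > 0 \<and> (\<forall>j\<in>{1..K}. \<forall>m n. m \<noteq> 0 \<longrightarrow> n \<noteq> 0 \<longrightarrow> max \<bar>m\<bar> \<bar>n\<bar> \<ge> M \<longrightarrow>
     mu (Z j) m n \<le> C * cmod (char_poly (core_pts K Z) c m n))"
proof -
  obtain \<delta> where d: "\<delta> > 0" "\<And>t m n. t \<in> {1..<K} \<Longrightarrow> \<delta> * mu (Z t) m n \<le> cmod (char_poly (seg_pts Z t) c m n)
     \<and> \<delta> * mu (Z (Suc t)) m n \<le> cmod (char_poly (seg_pts Z t) c m n)"
    using seg_lower_unif by blast
  define w where "w P = cmod (c P) * (2*pi) ^ (fst P + snd P)" for P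
  have w0: "w P \<ge> 0" for P unfolding w_def by simp
  define A where "A = (\<Sum>P\<in>core_pts K Z. w P)"
  have A0: "A \<ge> 0" unfolding A_def using w0 by (simp add: sum_nonneg)
  define \<Lambda> where "\<Lambda> = ln (2*(A+1)/\<delta>)"
  have eL: "exp (-\<Lambda>) = \<delta> / (2*(A+1))" unfolding \<Lambda>_def exp_minus using d(1) A0 by simp
  have AL: "A * exp (-\<Lambda>) \<le> \<delta>/2"
  proof -
    have "A * exp (-\<Lambda>) = \<delta>/2 * (A/(A+1))" unfolding eL using A0 by (simp add: field_simps)
    also have "\<dots> \<le> \<delta>/2 * 1" using A0 d(1) by (intro mult_left_mono) auto
    finally show ?thesis by simp
  qed
  have Vb0: "Vb > 0" unfolding Vb_def by simp
  define L where "L = 2 * Vb * \<bar>\<Lambda>\<bar> + 1"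
  have Lpos: "L > 0" unfolding L_def using Vb0 by (simp add: add_nonneg_pos)
  define M where "M = exp L"
  have "\<forall>j\<in>{1..K}. \<forall>m n. m \<noteq> 0 \<longrightarrow> n \<noteq> 0 \<longrightarrow> max \<bar>m\<bar> \<bar>n\<bar> \<ge> M \<longrightarrow>
     mu (Z j) m n \<le> (2/\<delta>) * cmod (char_poly (core_pts K Z) c m n)"
  proof (intro ballI allI impI)
    fix j m n assume j: "j \<in> {1..K}" and mn: "m \<noteq> 0" "n \<noteq> 0" and big: "max \<bar>m\<bar> \<bar>n\<bar> \<ge> M"
    define a where "a = ln \<bar>m\<bar>"
    define b where "b = ln \<bar>n\<bar>"
    have ab: "max a b \<ge> L"
    proof (cases "\<bar>n\<bar> \<le> \<bar>m\<bar>")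
      case True
      hence "exp L \<le> \<bar>m\<bar>" using big unfolding M_def by auto
      hence "ln (exp L) \<le> ln \<bar>m\<bar>" using mn by (subst ln_le_cancel_iff) auto
      thus ?thesis unfolding a_def by auto
    next
      case False
      hence "exp L \<le> \<bar>n\<bar>" using big unfolding M_def by auto
      hence "ln (exp L) \<le> ln \<bar>n\<bar>" using mn by (subst ln_le_cancel_iff) auto
      thus ?thesis unfolding b_def by auto
    qed
    obtain t Zs g where t: "1 \<le> t" "t < K" and Zs: "Zs \<in> {Z t, Z (Suc t)}"
      and g: "max a b \<le> 2 * Vb * g" and all: "\<forall>P\<in>core_pts K Z. fl P a b \<le> fl Zs a b"
      and gap: "\<forall>P\<in>core_pts K Z - seg_pts Z t. fl P a b \<le> fl Zs a b - g"
      using geo[of a b] ab Lpos by (metis less_le_trans)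
    have "2 * Vb * \<bar>\<Lambda>\<bar> < 2 * Vb * g" using g ab unfolding L_def by linarith
    hence gL: "\<Lambda> \<le> g" using Vb0 by (simp add: mult_less_cancel_left_pos) 
    have muP: "mu P m n \<le> mu Zs m n * exp (-\<Lambda>)" if P: "P \<in> core_pts K Z - seg_pts Z t" for P
    proof -
      have "mu P m n = exp (fl P a b)" unfolding a_def b_def using mu_exp[OF mn] .
      also have "\<dots> \<le> exp (fl Zs a b - \<Lambda>)"
      proof -
        have gP: "fl P a b \<le> fl Zs a b - g" using gap P by blast
        thus ?thesis using gL by simp
      qed
      also have "\<dots> = mu Zs m n * exp (-\<Lambda>)" unfolding a_def b_def mu_exp[OF mn]
        by (simp add: exp_diff exp_minus divide_inverse)
      finally show ?thesis .
    qed
    have fin: "finite (core_pts K Z)" by (rule core_finite)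
    have sub: "seg_pts Z t \<subseteq> core_pts K Z" using seg_core t by auto
    define R where "R = char_poly (core_pts K Z - seg_pts Z t) c m n"
    have split: "char_poly (core_pts K Z) c m n = R + char_poly (seg_pts Z t) c m n"
      unfolding R_def char_poly_def by (rule sum.subset_diff[OF sub fin])
    have "cmod R \<le> (\<Sum>P\<in>core_pts K Z - seg_pts Z t. w P * mu P m n)"
      unfolding R_def char_poly_def
      by (rule order_trans[OF norm_sum]) (simp add: term_norm w_def)
    also have "\<dots> \<le> (\<Sum>P\<in>core_pts K Z - seg_pts Z t. w P * (mu Zs m n * exp (-\<Lambda>)))"
      by (intro sum_mono mult_left_mono muP w0)
    also have "\<dots> = (\<Sum>P\<in>core_pts K Z - seg_pts Z t. w P) * (mu Zs m n * exp (-\<Lambda>))"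
      by (simp add: sum_distrib_right)
    also have "\<dots> \<le> A * (mu Zs m n * exp (-\<Lambda>))"
      unfolding A_def using fin w0 mu_nn
      by (intro mult_right_mono sum_mono2) auto
    finally have Rb: "cmod R \<le> A * exp (-\<Lambda>) * mu Zs m n" by (simp add: mult_ac)
    have "A * exp (-\<Lambda>) * mu Zs m n \<le> \<delta>/2 * mu Zs m n" using AL mu_nn by (intro mult_right_mono) auto
    hence Rb2: "cmod R \<le> \<delta>/2 * mu Zs m n" using Rb by linarith
    have S: "\<delta> * mu Zs m n \<le> cmod (char_poly (seg_pts Z t) c m n)" using d(2)[of t m n] t Zs by auto
    have "cmod (char_poly (seg_pts Z t) c m n) \<le> cmod (char_poly (core_pts K Z) c m n) + cmod R"
      using norm_triangle_ineq4[of "char_poly (core_pts K Z) c m n" R] unfolding split by simp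
    hence h1: "\<delta>/2 * mu Zs m n \<le> cmod (char_poly (core_pts K Z) c m n)" using S Rb2 by linarith
    have "fl (Z j) a b \<le> fl Zs a b" using all Z_core[of j] j by auto
    hence "mu (Z j) m n \<le> mu Zs m n" unfolding a_def b_def mu_exp[OF mn] by simp
    hence "\<delta>/2 * mu (Z j) m n \<le> \<delta>/2 * mu Zs m n" using d(1) by (intro mult_left_mono) auto
    hence "\<delta>/2 * mu (Z j) m n \<le> cmod (char_poly (core_pts K Z) c m n)"
      using h1 by linarith
    thus "mu (Z j) m n \<le> (2/\<delta>) * cmod (char_poly (core_pts K Z) c m n)" using d(1)
      by (simp add: field_simps)
  qed
  moreover have "M > 0" unfolding M_def by simp
  ultimately show ?thesis by blast
qed

lemma final: "\<forall>j\<in>{1..K}. \<exists>C::real. \<exists>M::real. \<forall>m n :: real. max \<bar>m\<bar> \<bar>n\<bar> \<ge> M \<longrightarrow>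
           \<bar>m\<bar> ^ fst (Z j) * \<bar>n\<bar> ^ snd (Z j) \<le> C * cmod (char_poly (core_pts K Z) c m n)"
proof
  fix j assume j: "j \<in> {1..K}"
  obtain C M where M: "M > 0" and H: "\<And>m n. m \<noteq> 0 \<Longrightarrow> n \<noteq> 0 \<Longrightarrow> max \<bar>m\<bar> \<bar>n\<bar> \<ge> M \<Longrightarrow>
     mu (Z j) m n \<le> C * cmod (char_poly (core_pts K Z) c m n)"
    using main_nz j by blast
  have "\<forall>m n :: real. max \<bar>m\<bar> \<bar>n\<bar> \<ge> M \<longrightarrow>
           \<bar>m\<bar> ^ fst (Z j) * \<bar>n\<bar> ^ snd (Z j) \<le> C * cmod (char_poly (core_pts K Z) c m n)"
  proof (intro allI impI)
    fix m n :: real assume big: "max \<bar>m\<bar> \<bar>n\<bar> \<ge> M"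
    define h where "h x y = C * cmod (char_poly (core_pts K Z) c x y) - \<bar>x\<bar> ^ fst (Z j) * \<bar>y\<bar> ^ snd (Z j)" for x y
    have hnz: "h x y \<ge> 0" if "x \<noteq> 0" "y \<noteq> 0" "max \<bar>x\<bar> \<bar>y\<bar> \<ge> M" for x y
      using H[OF that] unfolding h_def mu_def by simp
    have "h m n \<ge> 0"
    proof (cases "m \<noteq> 0 \<and> n \<noteq> 0")
      case True then show ?thesis using hnz big by auto
    next
      case False
      show ?thesis
      proof (cases "n = 0")
        case n0: True
        hence m: "\<bar>m\<bar> \<ge> M" using big by auto
        hence m0: "m \<noteq> 0" using M by auto
        have "isCont (\<lambda>y. h m y) 0" unfolding h_def char_poly_def by (intro continuous_intros)
        hence lim: "((\<lambda>y. h m y) \<longlongrightarrow> h m 0) (at 0)" by (simp add: isCont_def)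
        have ev: "eventually (\<lambda>y. 0 \<le> h m y) (at 0)"
          unfolding eventually_at_filter
          by (rule always_eventually) (use hnz m0 m in \<open>auto simp: max_def\<close>)
        have "0 \<le> h m 0" by (rule tendsto_lowerbound[OF lim ev]) simp
        thus ?thesis using n0 by simp
      next
        case n0: False
        hence m0: "m = 0" using False by auto
        hence n: "\<bar>n\<bar> \<ge> M" using big by auto
        have "isCont (\<lambda>x. h x n) 0" unfolding h_def char_poly_def by (intro continuous_intros)
        hence lim: "((\<lambda>x. h x n) \<longlongrightarrow> h 0 n) (at 0)" by (simp add: isCont_def)
        have ev: "eventually (\<lambda>x. 0 \<le> h x n) (at 0)"
          unfolding eventually_at_filter
          by (rule always_eventually) (use hnz n0 n in \<open>auto simp: max_def\<close>)
        have "0 \<le> h 0 n" by (rule tendsto_lowerbound[OF lim ev]) simp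
        thus ?thesis using m0 by simp
      qed
    qed
    thus "\<bar>m\<bar> ^ fst (Z j) * \<bar>n\<bar> ^ snd (Z j) \<le> C * cmod (char_poly (core_pts K Z) c m n)"
      unfolding h_def by simp
  qed
  thus "\<exists>C::real. \<exists>M::real. \<forall>m n :: real. max \<bar>m\<bar> \<bar>n\<bar> \<ge> M \<longrightarrow>
           \<bar>m\<bar> ^ fst (Z j) * \<bar>n\<bar> ^ snd (Z j) \<le> C * cmod (char_poly (core_pts K Z) c m n)" by blast
qed

end

theorem lemma3:
  fixes K :: nat and Z :: "nat \<Rightarrow> nat \<times> nat" and c :: "nat \<times> nat \<Rightarrow> complex"
  assumes "core_operator K Z c" and "elliptic K Z c"
  shows "\<forall>j\<in>{1..K}. \<exists>C::real. \<exists>M::real. \<forall>m n :: real. max \<bar>m\<bar> \<bar>n\<bar> \<ge> M \<longrightarrow>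
           \<bar>m\<bar> ^ fst (Z j) * \<bar>n\<bar> ^ snd (Z j) \<le> C * cmod (char_poly (core_pts K Z) c m n)"
  using LL.final[OF LL.intro[OF assms]] .


end
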